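(* Let $a\in[0,4)$. Then for every $s\in Q_a$, $\lim_{n\to\infty}W^n(s)=(0,0,0,0)$.
   Context: $W:\mathbb{R}^4\to\mathbb{R}^4$ is the map $W(x,y,u,v)=(x',y',u',v')$ with $x'=\tfrac12 xu+\tfrac14 yu$, $y'=\tfrac12 xv+\tfrac14 yu+\tfrac13 yv$, $u'=\tfrac12 xu+\tfrac12 xv+\tfrac14 yu+\tfrac13 yv$, $v'=\tfrac14 yu+\tfrac13 yv$. $W^n$ denotes the $n$-fold iterate. $P=\{(x,y,u,v): x,y,u,v\ge0\}$ and $Q_a=\{(x,y,u,v)\in P: x+y+u+v\le a\}$. *)

theory Defs
  imports "HOL-Analysis.Analysis"
begin

definition W :: "real \<times> real \<times> real \<times> real \<Rightarrow> real \<times> real \<times> real \<times> real" where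
  "W s = (case s of (x, y, u, v) \<Rightarrow>
     (x * u/2 + y * u/4,
      x* v/2 + y * u/4 + y* v/3,
      x * u/2 + x* v/2 + y * u/4 + y* v/3,
      y * u/4 + y* v/3))"

definition P :: "(real \<times> real \<times> real \<times> real) set" where
  "P = {(x, y, u, v). x \<ge> 0 \<and> y \<ge> 0 \<and> u \<ge> 0 \<and> v \<ge> 0}"

definition Q :: "real \<Rightarrow> (real \<times> real \<times> real \<times> real) set" where
  "Q a = {(x, y, u, v). (x, y, u, v) \<in> P \<and> x + y + u + v \<le> a}"

end

theory Submission
  imports Defs
begin

definition sig :: "real \<times> real \<times> real \<times> real \<Rightarrow> real" where
  "sig s = (case s of (x, y, u, v) \<Rightarrow> x + y + u + v)"

lemma W_P: "s \<in> P \<Longrightarrow> W s \<in> P"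
  by (cases s) (auto simp: P_def W_def)

lemma W_sig: assumes "s \<in> P" shows "sig (W s) \<le> sig s ^ 2 / 4"
proof -
  obtain x y u v where s: "s = (x,y,u,v)" by (cases s) auto
  have "sig (W s) = (x+y)*(u+v)" by (simp add: s sig_def W_def algebra_simps)
  also have "\<dots> \<le> (x+y+u+v)^2/4"
  proof -
    have e: "(x+y+u+v)^2/4 - (x+y)*(u+v) = (x+y-(u+v))^2/4"
      by (simp add: power2_eq_square field_simps)
    have "0 \<le> (x+y-(u+v))^2/4" by simp
    thus ?thesis using e by linarith
  qed
  finally show ?thesis by (simp add: s sig_def)
qed

lemma sig_nonneg: "s \<in> P \<Longrightarrow> sig s \<ge> 0"
  by (cases s) (auto simp: P_def sig_def)

lemma comps:
  assumes "s \<in> P"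
  shows "0 \<le> fst s \<and> fst s \<le> sig s" "0 \<le> fst (snd s) \<and> fst (snd s) \<le> sig s"
    "0 \<le> fst (snd (snd s)) \<and> fst (snd (snd s)) \<le> sig s"
    "0 \<le> snd (snd (snd s)) \<and> snd (snd (snd s)) \<le> sig s"
  using assms by (cases s; auto simp: P_def sig_def)+

lemma iter_bound:
  assumes "0 \<le> a" "a < 4" "s \<in> P" "sig s \<le> a"
  shows "(W ^^ n) s \<in> P \<and> sig ((W ^^ n) s) \<le> a * (a/4)^n"
proof (induction n)
  case 0 then show ?case using assms by simp
next
  case (Suc n)
  let ?t = "(W ^^ n) s"
  have tP: "?t \<in> P" and b: "sig ?t \<le> a * (a/4)^n" using Suc by auto
  have nn: "0 \<le> sig ?t" using sig_nonneg[OF tP] .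
  have "(a/4)^n \<le> 1" using assms by (simp add: power_le_one)
  hence "sig ?t \<le> a" using b assms by (meson mult_left_le order_trans)
  have "sig (W ?t) \<le> sig ?t * sig ?t / 4" using W_sig[OF tP] by (simp add: power2_eq_square)
  also have "\<dots> \<le> (a * (a/4)^n) * a / 4"
    using mult_mono[OF b \<open>sig ?t \<le> a\<close>] nn assms by (simp add: divide_right_mono)
  also have "\<dots> = a * (a/4)^Suc n" by simp
  finally show ?case using W_P[OF tP] by simp
qed

theorem lemma3p2:
  fixes a :: real and s :: "real \<times> real \<times> real \<times> real"
  assumes "0 \<le> a" and "a < 4" and "s \<in> Q a"
  shows "(\<lambda>n. (W ^^ n) s) \<longlonglongrightarrow> (0, 0, 0, 0)"
proof -
  have sP: "s \<in> P" and ss: "sig s \<le> a" using assms(3)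
    by (cases s; auto simp: Q_def P_def sig_def)+
  define g where "g n = a * (a/4)^n" for n
  have g0: "g \<longlonglongrightarrow> 0" unfolding g_def
    using assms by (intro tendsto_mult_right_zero LIMSEQ_power_zero) auto
  define f where "f n = (W ^^ n) s" for n
  have B: "f n \<in> P" "sig (f n) \<le> g n" for n
    using iter_bound[OF assms(1,2) sP ss, of n] by (auto simp: f_def g_def)
  have c1: "(\<lambda>n. fst (f n)) \<longlonglongrightarrow> 0"
    and c2: "(\<lambda>n. fst (snd (f n))) \<longlonglongrightarrow> 0"
    and c3: "(\<lambda>n. fst (snd (snd (f n)))) \<longlonglongrightarrow> 0"
    and c4: "(\<lambda>n. snd (snd (snd (f n)))) \<longlonglongrightarrow> 0"
    by (rule tendsto_sandwich[OF _ _ tendsto_const g0];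
        intro always_eventually allI;
        meson B comps order_trans)+
  have "(\<lambda>n. (fst (f n), fst (snd (f n)), fst (snd (snd (f n))), snd (snd (snd (f n)))))
        \<longlonglongrightarrow> (0, 0, 0, 0)"
    by (intro tendsto_Pair c1 c2 c3 c4)
  thus ?thesis by (simp add: f_def)
qed

end
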